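(* In the setting below, the map $\phi:\bigoplus_{i=1}^nF_i\to H_1(\Gamma,\rho^\beta)$ is equivariant for the natural action of $u_k$ on the target, where $u_k$ acts on the source trivially on $F_i$ for $i\neq k$ and by multiplication by $\chi=\beta^T$ on $F_k$. Moreover $\phi$ is injective.
   Context: Setting: $Q=\{q_1,\ldots,q_n\}\subset\mathbb{P}^1$, $b,c$ further points; $\Gamma=\pi_1(\mathbb{P}^1-Q-\{c\},b)$ with generators $\alpha_i$ (around $q_i$), $\delta$ (around $c$), relation $\delta\alpha_1\cdots\alpha_n=1$; $\delta_1=\delta$, $\delta_{i+1}=\alpha_i\delta_i\alpha_i^{-1}$; $u_k$ acts on $\Gamma$ by $\mu_k$ with $\mu_k(\alpha_i)=\alpha_i$ ($i\ne k$), $\mu_k(\alpha_k)=\delta_k^{-1}\alpha_k\delta_k$, $\mu_k(\delta_k)=\delta_k^{-1}\alpha_k^{-1}\delta_k\alpha_k\delta_k$. $\rho:\Gamma\to GL(V)$ with $\rho(\delta)=1$ and semisimple $\rho(\alpha_i)$; $\beta^{H_i},\beta^T\in\mathbb{C}^*$ with $\beta^T\prod\beta^{H_i}=1$ and $\beta^T\ne1$; $\rho^\beta(\alpha_i)=\beta^{H_i}\rho(\alpha_i)$, $\rho^\beta(\delta)=\beta^T$. $C_1/\partial C_2$: span of $G[\gamma,w]$, linear in $w$, with $G[\xi\gamma,w]=G[\gamma,w]+G[\xi,\rho^\beta(\gamma)w]$; $H_1(\Gamma,\rho^\beta)=\ker(\partial:G[\gamma,w]\mapsto\rho^\beta(\gamma)w-w)$;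 natural action $G[\gamma,w]\mapsto G[\mu_k(\gamma),w]$. $F_i\subset V$ is the space of vectors fixed by $\rho^\beta(\alpha_i)$, and $\phi_i(f)=G[\alpha_i,f]$, $\phi=\sum\phi_i$. *)

theory Defs
  imports "HOL-Analysis.Analysis" "HOL-Library.Function_Algebras"
begin

text \<open>Gamma = pi_1(P^1 - Q - {c}, b) = < alpha_1..alpha_n, delta | delta alpha_1 ... alpha_n = 1 >,
  which is free on alpha_1..alpha_n.  A letter (i, False) is alpha_i, (i, True) is alpha_i^-1.\<close>

type_synonym word = "(nat \<times> bool) list"

definition gen_inv :: "nat \<times> bool \<Rightarrow> nat \<times> bool" where
  "gen_inv x = (fst x, \<not> snd x)"

fun push :: "nat \<times> bool \<Rightarrow> word \<Rightarrow> word" where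
  "push a [] = [a]"
| "push a (b # ys) = (if fst a = fst b \<and> snd a \<noteq> snd b then ys else a # b # ys)"

definition reduce :: "word \<Rightarrow> word" where
  "reduce xs = foldr push xs []"

definition reduced :: "word \<Rightarrow> bool" where
  "reduced xs = (\<forall>i. Suc i < length xs \<longrightarrow>
      \<not> (fst (xs ! i) = fst (xs ! Suc i) \<and> snd (xs ! i) \<noteq> snd (xs ! Suc i)))"

definition FG :: "nat \<Rightarrow> word set" where
  "FG n = {w. reduced w \<and> (\<forall>x\<in>set w. fst x \<in> {1..n})}"

definition fg_mult :: "word \<Rightarrow> word \<Rightarrow> word" where
  "fg_mult x y = reduce (x @ y)"

definition fg_inv :: "word \<Rightarrow> word" where
  "fg_inv x = rev (map gen_inv x)"

definition alpha :: "nat \<Rightarrow> word" where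
  "alpha i = [(i, False)]"

definition delta :: "nat \<Rightarrow> word" where
  "delta n = fg_inv (map (\<lambda>i. (i, False)) [1..<Suc n])"

text \<open>deltas n j = delta_(j+1): delta_1 = delta, delta_(i+1) = alpha_i delta_i alpha_i^-1\<close>
fun deltas :: "nat \<Rightarrow> nat \<Rightarrow> word" where
  "deltas n 0 = delta n"
| "deltas n (Suc j) = fg_mult (fg_mult (alpha (Suc j)) (deltas n j)) (fg_inv (alpha (Suc j)))"

definition delta_k :: "nat \<Rightarrow> nat \<Rightarrow> word" where
  "delta_k n k = deltas n (k - 1)"

definition mu_gen :: "nat \<Rightarrow> nat \<Rightarrow> nat \<Rightarrow> word" where
  "mu_gen n k i = (if i = k then fg_mult (fg_mult (fg_inv (delta_k n k)) (alpha k)) (delta_k n k)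
                   else alpha i)"

definition mu :: "nat \<Rightarrow> nat \<Rightarrow> word \<Rightarrow> word" where
  "mu n k w = reduce (concat (map (\<lambda>(i, b). if b then fg_inv (mu_gen n k i) else mu_gen n k i) w))"

definition rep :: "(nat \<Rightarrow> complex^'d^'d) \<Rightarrow> word \<Rightarrow> complex^'d^'d" where
  "rep M w = foldr (\<lambda>(i, b) acc. (if b then matrix_inv (M i) else M i) ** acc) w (mat 1)"

text \<open>rho^beta(alpha_i) = beta^(H_i) rho(alpha_i)\<close>
definition twist :: "(nat \<Rightarrow> complex^'d^'d) \<Rightarrow> (nat \<Rightarrow> complex) \<Rightarrow> nat \<Rightarrow> complex^'d^'d" where
  "twist A bH i = mat (bH i) ** A i"

definition semisimple :: "complex^'d^'d \<Rightarrow> bool" where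
  "semisimple A = (\<exists>P::complex^'d^'d. invertible P \<and>
      (\<forall>i j. i \<noteq> j \<longrightarrow> (matrix_inv P ** A ** P) $ i $ j = 0))"

text \<open>The chain space C_1 is modelled as complex-valued functions on Gamma \<times> V, the symbol
  [gamma, w] being the indicator of (gamma, w).  The class G[gamma,w] in C_1/\<partial>C_2 is the
  class of [gamma,w] modulo the subspace rel_space spanned by the linearity relations in w and the
  cocycle relations G[xi gamma, w] = G[gamma, w] + G[xi, rho^beta(gamma) w].\<close>

definition sym :: "word \<Rightarrow> complex^'d \<Rightarrow> (word \<times> (complex^'d) \<Rightarrow> complex)" where
  "sym g w = (\<lambda>p. if p = (g, w) then 1 else 0)"

definition cscale :: "complex \<Rightarrow> ('a \<Rightarrow> complex) \<Rightarrow> ('a \<Rightarrow> complex)" where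
  "cscale c f = (\<lambda>p. c * f p)"

definition rel_gens :: "nat \<Rightarrow> (nat \<Rightarrow> complex^'d^'d) \<Rightarrow> (word \<times> (complex^'d) \<Rightarrow> complex) set" where
  "rel_gens n R =
     {sym g (a *s v + b *s w) - cscale a (sym g v) - cscale b (sym g w)
        | g a b v w. g \<in> FG n}
   \<union> {sym (fg_mult xi g) w - sym g w - sym xi (rep R g *v w)
        | xi g w. xi \<in> FG n \<and> g \<in> FG n}"

definition rel_space :: "nat \<Rightarrow> (nat \<Rightarrow> complex^'d^'d) \<Rightarrow> (word \<times> (complex^'d) \<Rightarrow> complex) set" where
  "rel_space n R = module.span cscale (rel_gens n R)"

definition eqC :: "nat \<Rightarrow> (nat \<Rightarrow> complex^'d^'d) \<Rightarrow> (word \<times> (complex^'d) \<Rightarrow> complex)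
                   \<Rightarrow> (word \<times> (complex^'d) \<Rightarrow> complex) \<Rightarrow> bool" where
  "eqC n R x y = (x - y \<in> rel_space n R)"

definition phi :: "nat \<Rightarrow> (nat \<Rightarrow> complex^'d) \<Rightarrow> (word \<times> (complex^'d) \<Rightarrow> complex)" where
  "phi n f = (\<Sum>i=1..n. sym (alpha i) (f i))"

definition Fix :: "complex^'d^'d \<Rightarrow> (complex^'d) set" where
  "Fix B = {v. B *v v = v}"

end

theory Submission
  imports Defs
begin


lemma reduced_Nil[simp]: "reduced []" by (simp add: reduced_def)

lemma reduced_Cons: "reduced (a # ys) \<longleftrightarrow> reduced ys \<and>
   (ys = [] \<or> \<not> (fst a = fst (hd ys) \<and> snd a \<noteq> snd (hd ys)))"
proof
  assume r: "reduced (a # ys)"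
  have "reduced ys" unfolding reduced_def
  proof (intro allI impI)
    fix i assume "Suc i < length ys"
    with r[unfolded reduced_def, rule_format, of "Suc i"] show
      "\<not> (fst (ys ! i) = fst (ys ! Suc i) \<and> snd (ys ! i) \<noteq> snd (ys ! Suc i))" by simp
  qed
  moreover have "ys = [] \<or> \<not> (fst a = fst (hd ys) \<and> snd a \<noteq> snd (hd ys))"
  proof (cases ys)
    case (Cons b zs) with r[unfolded reduced_def, rule_format, of 0] show ?thesis by simp
  qed simp
  ultimately show "reduced ys \<and> (ys = [] \<or> \<not> (fst a = fst (hd ys) \<and> snd a \<noteq> snd (hd ys)))" by blast
next
  assume h: "reduced ys \<and> (ys = [] \<or> \<not> (fst a = fst (hd ys) \<and> snd a \<noteq> snd (hd ys)))"
  show "reduced (a # ys)" unfolding reduced_def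
  proof (intro allI impI)
    fix i assume i: "Suc i < length (a # ys)"
    show "\<not> (fst ((a#ys) ! i) = fst ((a#ys) ! Suc i) \<and> snd ((a#ys) ! i) \<noteq> snd ((a#ys) ! Suc i))"
    proof (cases i)
      case 0 with h i show ?thesis by (cases ys) auto
    next
      case (Suc j) with h i show ?thesis unfolding reduced_def by auto
    qed
  qed
qed

lemma reduced_push: "reduced ys \<Longrightarrow> reduced (push a ys)"
  by (cases ys) (auto simp: reduced_Cons)

lemma reduced_reduce: "reduced (reduce xs)"
  by (induction xs) (auto simp: reduce_def reduced_push)

lemma reduce_reduced: "reduced xs \<Longrightarrow> reduce xs = xs"
proof (induction xs)
  case Nil then show ?case by (simp add: reduce_def)
next
  case (Cons a xs)
  then have "reduced xs" by (simp add: reduced_Cons)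
  with Cons have "reduce xs = xs" by simp
  then show ?case using Cons.prems by (cases xs) (auto simp: reduce_def reduced_Cons)
qed

lemma reduce_idem[simp]: "reduce (reduce xs) = reduce xs"
  by (simp add: reduce_reduced reduced_reduce)

lemma set_push: "set (push a ys) \<subseteq> insert a (set ys)"
  by (cases ys) auto

lemma set_reduce: "set (reduce xs) \<subseteq> set xs"
proof (induction xs)
  case (Cons a xs) then show ?case using set_push[of a "reduce xs"] by (auto simp: reduce_def)
qed (simp add: reduce_def)

lemma reduce_append: "reduce (xs @ ys) = foldr push xs (reduce ys)"
  by (simp add: reduce_def)

lemma inv_cancel: "reduced d \<Longrightarrow> fg_mult (fg_inv d) d = []"
proof -
  have "foldr push (rev (map gen_inv d)) d = []" for d
    by (induction d) (auto simp: gen_inv_def)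
  then show "reduced d \<Longrightarrow> fg_mult (fg_inv d) d = []"
    by (simp add: fg_mult_def fg_inv_def reduce_append reduce_reduced)
qed

lemma reduced_inv: "reduced d \<Longrightarrow> reduced (fg_inv d)"
  unfolding reduced_def fg_inv_def
proof (intro allI impI)
  fix i assume r: "\<forall>i. Suc i < length d \<longrightarrow> \<not> (fst (d ! i) = fst (d ! Suc i) \<and> snd (d ! i) \<noteq> snd (d ! Suc i))"
    and i: "Suc i < length (rev (map gen_inv d))"
  let ?j = "length d - Suc (Suc i)"
  have j: "Suc ?j < length d" and e: "length d - Suc i = Suc ?j" using i by auto
  show "\<not> (fst (rev (map gen_inv d) ! i) = fst (rev (map gen_inv d) ! Suc i) \<and>
            snd (rev (map gen_inv d) ! i) \<noteq> snd (rev (map gen_inv d) ! Suc i))"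
    using r[rule_format, OF j] i e by (auto simp: rev_nth gen_inv_def)
qed

lemma FG_mult: "x \<in> FG n \<Longrightarrow> y \<in> FG n \<Longrightarrow> fg_mult x y \<in> FG n"
  unfolding FG_def fg_mult_def using set_reduce[of "x @ y"] reduced_reduce by auto

lemma FG_inv: "x \<in> FG n \<Longrightarrow> fg_inv x \<in> FG n"
  unfolding FG_def using reduced_inv by (auto simp: fg_inv_def gen_inv_def)

lemma FG_alpha: "i \<in> {1..n} \<Longrightarrow> alpha i \<in> FG n"
  by (simp add: FG_def alpha_def reduced_def)

lemma FG_Nil: "[] \<in> FG n" by (simp add: FG_def)



type_synonym 'd mtx = "complex^'d^'d"

lemma inv_props: "invertible (B::('d::finite) mtx) \<Longrightarrow> B ** matrix_inv B = mat 1 \<and> matrix_inv B ** B = mat 1"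
  unfolding invertible_def matrix_inv_def by (rule someI_ex)

lemma inv_unique: "invertible (B::('d::finite) mtx) \<Longrightarrow> B ** C = mat 1 \<Longrightarrow> matrix_inv B = C"
  by (metis inv_props matrix_mul_assoc matrix_mul_lid matrix_mul_rid)

lemma mat_mult_left: "(mat c ** (B::('d::finite) mtx)) = (\<chi> i j. c * B$i$j)"
  by (simp add: matrix_matrix_mult_def mat_def vec_eq_iff if_distrib[where f="\<lambda>x. x * y" for y] cong: if_cong)

lemma mat_mult_right: "((B::('d::finite) mtx) ** mat c) = (\<chi> i j. c * B$i$j)"
  by (simp add: matrix_matrix_mult_def mat_def vec_eq_iff if_distrib[where f="\<lambda>x. y * x" for y] mult.commute cong: if_cong)

lemma mat_comm: "mat c ** (B::('d::finite) mtx) = B ** mat c"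
  by (simp add: mat_mult_left mat_mult_right)

lemma mat_mat: "mat a ** (mat b :: ('d::finite) mtx) = mat (a * b)"
  by (simp add: mat_mult_left vec_eq_iff) (simp add: mat_def)

lemma mat_inv: "c \<noteq> 0 \<Longrightarrow> invertible (mat c :: ('d::finite) mtx)"
  unfolding invertible_def by (rule exI[of _ "mat (inverse c)"]) (simp add: mat_mat)

lemma mat_vec: "mat c *v (v::complex^('d::finite)) = c *s v"
  by (simp add: matrix_vector_mult_def mat_def vec_eq_iff if_distrib[where f="\<lambda>x. x * y" for y] cong: if_cong)

lemma rep_Nil[simp]: "rep R [] = mat 1" by (simp add: rep_def)
lemma rep_Cons: "rep R ((i,b) # w) = (if b then matrix_inv (R i) else R i) ** rep R w"
  by (simp add: rep_def)

lemma rep_append: "rep R (xs @ ys) = rep R xs ** rep R ys"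
  by (induction xs) (auto simp: rep_def matrix_mul_assoc)

definition okw :: "nat \<Rightarrow> word \<Rightarrow> bool" where "okw n w = (\<forall>x\<in>set w. fst x \<in> {1..n})"

lemma rep_push:
  assumes "\<forall>i\<in>{1..n}. invertible (R i)" "fst a \<in> {1..n}"
  shows "rep R (push a ys) = rep R (a # ys)"
proof (cases ys)
  case (Cons b zs)
  show ?thesis
  proof (cases "fst a = fst b \<and> snd a \<noteq> snd b")
    case True
    then have "invertible (R (fst a))" using assms by auto
    from inv_props[OF this] True Cons show ?thesis
      by (cases a; cases b) (auto simp: rep_def matrix_mul_assoc)
  qed (auto simp: Cons)
qed simp

lemma rep_reduce:
  assumes "\<forall>i\<in>{1..n}. invertible (R i)" "okw n xs"
  shows "rep R (reduce xs) = rep R xs"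
  using assms(2)
proof (induction xs)
  case (Cons a xs)
  then have "fst a \<in> {1..n}" "okw n xs" by (auto simp: okw_def)
  then show ?case using Cons rep_push[OF assms(1)]
    by (cases a) (simp add: reduce_def rep_Cons)
qed (simp add: reduce_def)

lemma FG_okw: "x \<in> FG n \<Longrightarrow> okw n x" by (simp add: FG_def okw_def)

lemma rep_mult:
  assumes "\<forall>i\<in>{1..n}. invertible (R i)" "x \<in> FG n" "y \<in> FG n"
  shows "rep R (fg_mult x y) = rep R x ** rep R y"
  using rep_reduce[OF assms(1), of "x @ y"] assms(2,3)
  by (auto simp: fg_mult_def rep_append okw_def FG_def)



lemma mat_pull: "(mat a ** (X::('d::finite) mtx)) ** (mat b ** Y) = mat (a*b) ** (X ** Y)"
proof -
  have "(mat a ** X) ** (mat b ** Y) = mat a ** ((X ** mat b) ** Y)"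
    by (simp add: matrix_mul_assoc)
  also have "\<dots> = mat a ** (mat b ** (X ** Y))" by (simp add: mat_comm matrix_mul_assoc)
  also have "\<dots> = mat (a*b) ** (X ** Y)" by (simp add: matrix_mul_assoc mat_mat)
  finally show ?thesis .
qed

lemma twist_inv:
  assumes "bH i \<noteq> 0" "invertible (A i :: ('d::finite) mtx)"
  shows "invertible (twist A bH i)"
    "matrix_inv (twist A bH i) = mat (inverse (bH i)) ** matrix_inv (A i)"
proof -
  show "invertible (twist A bH i)" unfolding twist_def
    using assms by (simp add: invertible_mult mat_inv)
  then show "matrix_inv (twist A bH i) = mat (inverse (bH i)) ** matrix_inv (A i)"
    apply (rule inv_unique)
    using inv_props[OF assms(2)] assms(1) by (simp add: twist_def mat_pull)
qed

definition scw :: "(nat \<Rightarrow> complex) \<Rightarrow> word \<Rightarrow> complex" where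
  "scw bH w = foldr (\<lambda>(i,b) acc. (if b then inverse (bH i) else bH i) * acc) w 1"

lemma rep_twist:
  assumes "\<forall>i\<in>{1..n}. bH i \<noteq> 0 \<and> invertible (A i :: ('d::finite) mtx)" "okw n w"
  shows "rep (twist A bH) w = mat (scw bH w) ** rep A w"
  using assms(2)
proof (induction w)
  case Nil then show ?case by (simp add: scw_def)
next
  case (Cons x w)
  obtain i b where x: "x = (i,b)" by (cases x)
  have i: "i \<in> {1..n}" "okw n w" using Cons.prems x by (auto simp: okw_def)
  then have IH: "rep (twist A bH) w = mat (scw bH w) ** rep A w" using Cons.IH by simp
  have "(if b then matrix_inv (twist A bH i) else twist A bH i) =
        mat (if b then inverse (bH i) else bH i) ** (if b then matrix_inv (A i) else A i)"
    using twist_inv[of bH i A] assms(1) i by (auto simp: twist_def)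
  then show ?case using IH by (simp add: x rep_Cons mat_pull scw_def)
qed

lemma delta_Suc: "delta (Suc n) = (Suc n, True) # delta n"
  by (simp add: delta_def fg_inv_def gen_inv_def)

lemma delta_0: "delta 0 = []" by (simp add: delta_def fg_inv_def)

lemma scw_delta: "scw bH (delta n) = (\<Prod>i=1..n. inverse (bH i))"
  by (induction n) (auto simp: delta_Suc delta_0 scw_def prod.nat_ivl_Suc')

lemma okw_delta_le: "m \<le> n \<Longrightarrow> okw n (delta m)"
  by (induction m) (auto simp: delta_Suc delta_0 okw_def)

lemma FG_delta: "delta n \<in> FG n"
proof -
  have "reduced (map (\<lambda>i. (i, False)) [1..<Suc n])" by (simp add: reduced_def)
  then have "reduced (delta n)" unfolding delta_def by (rule reduced_inv)
  then show ?thesis using okw_delta_le[of n n] by (simp add: FG_def okw_def)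
qed

locale setting =
  fixes n :: nat and A :: "nat \<Rightarrow> complex^'d^'d" and bH :: "nat \<Rightarrow> complex" and bT :: complex
  assumes inv: "\<And>i. i \<in> {1..n} \<Longrightarrow> invertible (A i)"
    and rho_delta: "rep A (delta n) = mat 1"
    and bH0: "\<And>i. i \<in> {1..n} \<Longrightarrow> bH i \<noteq> 0"
    and prod1: "bT * (\<Prod>i=1..n. bH i) = 1"
begin

abbreviation "R \<equiv> twist A bH"

lemma Rinv: "\<forall>i\<in>{1..n}. invertible (R i)"
  using twist_inv bH0 inv by blast

lemma rep_delta: "rep R (delta n) = mat bT"
proof -
  have "bT = inverse (\<Prod>i=1..n. bH i)" using prod1 inverse_unique[of "\<Prod>i=1..n. bH i" bT] by (simp add: mult.commute)
  then have "scw bH (delta n) = bT" using prod_inversef[of bH "{1..n}"] by (simp add: scw_delta o_def)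
  then show ?thesis using rep_twist[of n bH A "delta n"] bH0 inv okw_delta_le[of n n] rho_delta
    by simp
qed

lemma deltas_props: "j < n \<Longrightarrow> deltas n j \<in> FG n \<and> rep R (deltas n j) = mat bT"
proof (induction j)
  case 0 then show ?case by (simp add: FG_delta rep_delta)
next
  case (Suc j)
  then have IH: "deltas n j \<in> FG n" "rep R (deltas n j) = mat bT" by auto
  have a: "alpha (Suc j) \<in> FG n" "fg_inv (alpha (Suc j)) \<in> FG n" using Suc.prems FG_alpha FG_inv by auto
  have m1: "fg_mult (alpha (Suc j)) (deltas n j) \<in> FG n" using a IH FG_mult by auto
  have iv: "invertible (R (Suc j))" using Rinv Suc.prems by auto
  have "rep R (deltas n (Suc j)) = (R (Suc j) ** mat bT) ** (matrix_inv (R (Suc j)) ** mat 1)"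
    using rep_mult[OF Rinv] a IH m1
    by (simp add: alpha_def fg_inv_def gen_inv_def rep_Cons)
  also have "\<dots> = mat bT ** (R (Suc j) ** matrix_inv (R (Suc j)))"
    by (simp add: mat_comm[of bT "R (Suc j)"] matrix_mul_assoc)
  also have "\<dots> = mat bT" using inv_props[OF iv] by simp
  finally show ?case using FG_mult[OF m1 a(2)] by simp
qed

lemma delta_k_props: "1 \<le> k \<Longrightarrow> k \<le> n \<Longrightarrow> delta_k n k \<in> FG n \<and> rep R (delta_k n k) = mat bT"
  unfolding delta_k_def by (rule deltas_props) simp

end


lemma cmod: "module (cscale :: complex \<Rightarrow> ('a \<Rightarrow> complex) \<Rightarrow> _)"
  by unfold_locales (auto simp: cscale_def fun_eq_iff algebra_simps)

lemma coc: "xi \<in> FG n \<Longrightarrow> g \<in> FG n \<Longrightarrow>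
  sym (fg_mult xi g) w - sym g w - sym xi (rep Rm g *v w) \<in> rel_space n Rm"
  unfolding rel_space_def
  by (rule module.span_base[OF cmod], unfold rel_gens_def, rule UnI2, blast)

lemma sym_Nil: "sym [] w \<in> rel_space n Rm"
proof -
  have "sym (fg_mult [] []) w - sym [] w - sym [] (rep Rm [] *v w) \<in> rel_space n Rm"
    by (rule coc) (auto simp: FG_Nil)
  then have "- sym [] w \<in> rel_space n Rm" by (simp add: fg_mult_def reduce_def)
  then show ?thesis unfolding rel_space_def using module.span_neg[OF cmod] by fastforce
qed

lemma mu_other: "i \<noteq> k \<Longrightarrow> mu n k (alpha i) = alpha i"
  by (simp add: mu_def mu_gen_def alpha_def reduce_def)

lemma mu_k: "mu n k (alpha k) = fg_mult (fg_mult (fg_inv (delta_k n k)) (alpha k)) (delta_k n k)"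
  by (simp add: mu_def mu_gen_def alpha_def fg_mult_def)

context setting begin

lemma step_k:
  assumes k: "1 \<le> k" "k \<le> n" and f: "R k *v f = f"
  shows "sym (alpha k) (bT *s f) - sym (mu n k (alpha k)) f \<in> rel_space n R"
proof -
  define d where "d = delta_k n k"
  define di where "di = fg_inv d"
  define a where "a = alpha k"
  define X where "X = fg_mult di a"
  have d: "d \<in> FG n" "rep R d = mat bT" using delta_k_props[OF k] by (auto simp: d_def)
  have di: "di \<in> FG n" using d FG_inv di_def by auto
  have a: "a \<in> FG n" using k FG_alpha a_def by auto
  have X: "X \<in> FG n" using di a FG_mult X_def by auto
  have Y: "mu n k (alpha k) = fg_mult X d" by (simp add: mu_k X_def di_def d_def a_def)
  have rv: "rep R a *v (bT *s f) = bT *s f"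
    by (simp add: a_def alpha_def rep_Cons vector_scalar_commute f)
  have E1: "sym (fg_mult X d) f - sym d f - sym X (bT *s f) \<in> rel_space n R"
    using coc[where Rm="twist A bH", OF X d(1), of f] d(2) by (simp add: mat_vec)
  have E2: "sym X (bT *s f) - sym a (bT *s f) - sym di (bT *s f) \<in> rel_space n R"
    using coc[where Rm="twist A bH", OF di a, of "bT *s f"] rv by (simp add: X_def)
  have c: "fg_mult di d = []" using d(1) inv_cancel by (simp add: di_def FG_def)
  have E3: "sym [] f - sym d f - sym di (bT *s f) \<in> rel_space n R"
    using coc[where Rm="twist A bH", OF di d(1), of f] d(2) c by (simp add: mat_vec)
  have E4: "sym [] f \<in> rel_space n R" by (rule sym_Nil)
  have eq: "sym a (bT *s f) - sym (fg_mult X d) f =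
     (- (sym (fg_mult X d) f - sym d f - sym X (bT *s f))) + (- (sym X (bT *s f) - sym a (bT *s f) - sym di (bT *s f)))
     + (sym [] f - sym d f - sym di (bT *s f)) - sym [] f"
    by (simp add: algebra_simps)
  show ?thesis unfolding Y unfolding a_def[symmetric] eq using E1 E2 E3 E4
    unfolding rel_space_def
    by (meson module.span_diff[OF cmod] module.span_add[OF cmod] module.span_neg[OF cmod])
qed

lemma part1:
  assumes k: "1 \<le> k" "k \<le> n" and f: "\<forall>i\<in>{1..n}. f i \<in> Fix (R i)"
  shows "eqC n R (phi n (f(k := bT *s f k))) (\<Sum>i=1..n. sym (mu n k (alpha i)) (f i))"
proof -
  have "phi n (f(k := bT *s f k)) - (\<Sum>i=1..n. sym (mu n k (alpha i)) (f i)) =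
        (\<Sum>i=1..n. sym (alpha i) ((f(k := bT *s f k)) i) - sym (mu n k (alpha i)) (f i))"
    by (simp add: phi_def sum_subtractf)
  also have "\<dots> \<in> rel_space n R" unfolding rel_space_def
  proof (rule module.span_sum[OF cmod])
    fix i assume i: "i \<in> {1..n}"
    show "sym (alpha i) ((f(k := bT *s f k)) i) - sym (mu n k (alpha i)) (f i) \<in> module.span cscale (rel_gens n R)"
    proof (cases "i = k")
      case True
      then show ?thesis using step_k[OF k, of "f k"] f i by (simp add: Fix_def rel_space_def)
    next
      case False
      then show ?thesis by (simp add: mu_other module.span_zero[OF cmod])
    qed
  qed
  finally show ?thesis by (simp add: eqC_def)
qed

end


lemma mm_add_r: "((A::('d::finite) mtx) + B) ** C = A ** C + B ** C"
  by (simp add: matrix_matrix_mult_def vec_eq_iff sum.distrib distrib_right)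

lemma mm_neg_l: "(- (A::('d::finite) mtx)) ** C = - (A ** C)"
  by (simp add: matrix_matrix_mult_def vec_eq_iff sum_negf)

definition Dl :: "nat \<Rightarrow> (nat \<Rightarrow> ('d::finite) mtx) \<Rightarrow> nat \<times> bool \<Rightarrow> 'd mtx" where
  "Dl t R x = (if fst x = t then (if snd x then - matrix_inv (R (fst x)) else mat 1) else 0)"

fun Dm :: "nat \<Rightarrow> (nat \<Rightarrow> ('d::finite) mtx) \<Rightarrow> word \<Rightarrow> 'd mtx" where
  "Dm t R [] = 0"
| "Dm t R (a # w) = Dm t R w + Dl t R a ** rep R w"

lemma rep_Cons': "rep R (a # w) = (if snd a then matrix_inv (R (fst a)) else R (fst a)) ** rep R w"
  by (cases a) (simp add: rep_Cons)

lemma Dm_append: "Dm t R (xs @ ys) = Dm t R ys + Dm t R xs ** rep R ys"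
  by (induction xs) (auto simp: rep_append mm_add_r matrix_mul_assoc rep_Cons' algebra_simps)

lemma Dm_push:
  assumes "\<forall>i\<in>{1..n}. invertible (R i)" "fst a \<in> {1..n}"
  shows "Dm t R (push a ys) = Dm t R (a # ys)"
proof (cases ys)
  case (Cons b zs)
  show ?thesis
  proof (cases "fst a = fst b \<and> snd a \<noteq> snd b")
    case True
    then have iv: "invertible (R (fst a))" using assms by auto
    have "Dl t R b + Dl t R a ** (if snd b then matrix_inv (R (fst b)) else R (fst b)) = 0"
      using inv_props[OF iv] True
      by (cases a; cases b) (auto simp: Dl_def mm_neg_l)
    then have "Dl t R b ** rep R zs + Dl t R a ** ((if snd b then matrix_inv (R (fst b)) else R (fst b)) ** rep R zs) = 0"
      by (metis matrix_mul_assoc mm_add_r times0_left)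
    then show ?thesis using True Cons by (simp add: rep_Cons' add.assoc)
  qed (auto simp: Cons)
qed simp

lemma Dm_reduce:
  assumes "\<forall>i\<in>{1..n}. invertible (R i)" "okw n xs"
  shows "Dm t R (reduce xs) = Dm t R xs"
  using assms(2)
proof (induction xs)
  case (Cons a xs)
  then have "fst a \<in> {1..n}" "okw n xs" by (auto simp: okw_def)
  then show ?case using Cons Dm_push[OF assms(1)] rep_reduce[OF assms(1)]
    by (simp add: reduce_def)
qed (simp add: reduce_def)

lemma Dm_mult:
  assumes "\<forall>i\<in>{1..n}. invertible (R i)" "x \<in> FG n" "y \<in> FG n"
  shows "Dm t R (fg_mult x y) = Dm t R y + Dm t R x ** rep R y"
  using Dm_reduce[OF assms(1), of "x @ y" t] assms(2,3)
  by (auto simp: fg_mult_def Dm_append okw_def FG_def)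



definition supp :: "('a \<Rightarrow> complex) \<Rightarrow> 'a set" where "supp x = {p. x p \<noteq> 0}"

definition lam :: "('a \<Rightarrow> complex) \<Rightarrow> ('a \<Rightarrow> complex) \<Rightarrow> complex" where
  "lam c x = (\<Sum>p\<in>supp x. x p * c p)"

lemma lam_T: "finite T \<Longrightarrow> supp x \<subseteq> T \<Longrightarrow> lam c x = (\<Sum>p\<in>T. x p * c p)"
  unfolding lam_def by (rule sum.mono_neutral_left) (auto simp: supp_def)

lemma sum_sym: "finite T \<Longrightarrow> (g, w) \<in> T \<Longrightarrow> (\<Sum>p\<in>T. sym g w p * c p) = c (g, w)"
  by (simp add: sym_def if_distrib[where f="\<lambda>x. x * y" for y] sum.delta' cong: if_cong)

lemma supp_sym: "supp (sym g w) \<subseteq> {(g,w)}" by (auto simp: supp_def sym_def)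

lemma rel_lam:
  fixes c :: "word \<times> (complex^'d::finite) \<Rightarrow> complex"
  assumes lin: "\<And>g a b v w. g \<in> FG n \<Longrightarrow> c (g, a *s v + b *s w) = a * c (g, v) + b * c (g, w)"
    and cc: "\<And>xi g w. xi \<in> FG n \<Longrightarrow> g \<in> FG n \<Longrightarrow> c (fg_mult xi g, w) = c (g, w) + c (xi, rep R g *v w)"
    and x: "x \<in> rel_space n R"
  shows "finite (supp x) \<and> lam c x = 0"
  using x unfolding rel_space_def
proof (rule module.span_induct_alt[OF cmod, where h="\<lambda>x. finite (supp x) \<and> lam c x = 0"])
  show "finite (supp 0) \<and> lam c 0 = 0" by (simp add: supp_def lam_def)
next
  fix a x y assume 21: "x \<in> rel_gens n R" and 22: "finite (supp y) \<and> lam c y = 0"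
  have fx: "finite (supp x) \<and> lam c x = 0"
    using 21 unfolding rel_gens_def
  proof (elim UnE CollectE exE conjE)
    fix g a b v w assume g: "g \<in> FG n" and xe: "x = sym g (a *s v + b *s w) - cscale a (sym g v) - cscale b (sym g w)"
    let ?T = "{(g, a *s v + b *s w), (g, v), (g, w)}"
    have s: "supp x \<subseteq> ?T" by (auto simp: xe supp_def sym_def cscale_def)
    have "lam c x = (\<Sum>p\<in>?T. sym g (a *s v + b *s w) p * c p - a * (sym g v p * c p) - b * (sym g w p * c p))"
      by (subst lam_T[OF _ s]) (auto simp: xe cscale_def algebra_simps)
    also have "\<dots> = c (g, a *s v + b *s w) - a * c (g, v) - b * c (g, w)"
      by (simp add: sum_subtractf sum_distrib_left[symmetric] sum_sym)
    also have "\<dots> = 0" using lin[OF g] by simp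
    finally show ?thesis using s finite_subset by auto
  next
    fix xi g w assume g: "xi \<in> FG n" "g \<in> FG n" and xe: "x = sym (fg_mult xi g) w - sym g w - sym xi (rep R g *v w)"
    let ?T = "{(fg_mult xi g, w), (g, w), (xi, rep R g *v w)}"
    have s: "supp x \<subseteq> ?T" by (auto simp: xe supp_def sym_def)
    have "lam c x = (\<Sum>p\<in>?T. sym (fg_mult xi g) w p * c p - sym g w p * c p - sym xi (rep R g *v w) p * c p)"
      by (subst lam_T[OF _ s]) (auto simp: xe algebra_simps)
    also have "\<dots> = c (fg_mult xi g, w) - c (g, w) - c (xi, rep R g *v w)"
      by (simp add: sum_subtractf sum_sym)
    also have "\<dots> = 0" using cc[OF g] by simp
    finally show ?thesis using s finite_subset by auto
  qed
  let ?T = "supp x \<union> supp y"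
  have fT: "finite ?T" using fx 22 by auto
  have s: "supp (cscale a x + y) \<subseteq> ?T" by (auto simp: supp_def cscale_def)
  have "lam c (cscale a x + y) = (\<Sum>p\<in>?T. a * (x p * c p) + y p * c p)"
    by (subst lam_T[OF fT s]) (simp add: cscale_def algebra_simps)
  also have "\<dots> = a * lam c x + lam c y"
    by (simp add: sum.distrib sum_distrib_left[symmetric] lam_T[OF fT])
  finally show "finite (supp (cscale a x + y)) \<and> lam c (cscale a x + y) = 0" using fx 22 s fT finite_subset by auto
qed



lemma sum_app: "(\<Sum>i\<in>I. (F i :: 'a \<Rightarrow> complex)) p = (\<Sum>i\<in>I. F i p)"
  by (induction I rule: infinite_finite_induct) auto

context setting begin

lemma part2:
  assumes e: "eqC n R (phi n f) (phi n g)" and t: "t \<in> {1..n}"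
  shows "f t = g t"
proof -
  have "f t $ j = g t $ j" for j
  proof -
    define c where "c = (\<lambda>p::word \<times> (complex^'d). (Dm t R (fst p) *v snd p) $ j)"
    define x where "x = phi n f - phi n g"
    have lin: "c (h, a *s v + b *s w) = a * c (h, v) + b * c (h, w)" for h a b v w
      by (simp add: c_def matrix_vector_right_distrib vector_scalar_commute)
    have cc: "c (fg_mult xi h, w) = c (h, w) + c (xi, rep R h *v w)" if "xi \<in> FG n" "h \<in> FG n" for xi h w
      using Dm_mult[OF Rinv that, of t]
      by (simp add: c_def matrix_vector_mult_add_rdistrib matrix_vector_mul_assoc)
    have r: "finite (supp x) \<and> lam c x = 0"
      using rel_lam[of n c R x, OF lin cc] e by (auto simp: eqC_def x_def)
    let ?T = "(\<lambda>i. (alpha i, f i)) ` {1..n} \<union> (\<lambda>i. (alpha i, g i)) ` {1..n}"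
    have xp: "x p = (\<Sum>i=1..n. sym (alpha i) (f i) p - sym (alpha i) (g i) p)" for p
      by (simp add: x_def phi_def sum_app sum_subtractf)
    have s: "supp x \<subseteq> ?T"
    proof
      fix p assume "p \<in> supp x"
      then have "x p \<noteq> 0" by (simp add: supp_def)
      then obtain i where "i \<in> {1..n}" "sym (alpha i) (f i) p - sym (alpha i) (g i) p \<noteq> 0"
        unfolding xp using sum.neutral by (metis (no_types, lifting))
      then show "p \<in> ?T" by (auto simp: sym_def split: if_splits)
    qed
    have fT: "finite ?T" by simp
    have "lam c x = (\<Sum>p\<in>?T. (\<Sum>i=1..n. sym (alpha i) (f i) p * c p - sym (alpha i) (g i) p * c p))"
      by (subst lam_T[OF fT s]) (simp add: xp sum_distrib_right left_diff_distrib)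
    also have "\<dots> = (\<Sum>i=1..n. (\<Sum>p\<in>?T. sym (alpha i) (f i) p * c p) - (\<Sum>p\<in>?T. sym (alpha i) (g i) p * c p))"
      by (subst sum.swap) (simp add: sum_subtractf)
    also have "\<dots> = (\<Sum>i=1..n. c (alpha i, f i) - c (alpha i, g i))"
      by (intro sum.cong refl) ((subst sum_sym, simp, blast)+, simp)
    also have "\<dots> = (\<Sum>i=1..n. if i = t then f t $ j - g t $ j else 0)"
      by (intro sum.cong refl) (simp add: c_def alpha_def Dl_def)
    also have "\<dots> = f t $ j - g t $ j" using t by simp
    finally show ?thesis using r by simp
  qed
  then show ?thesis by (simp add: vec_eq_iff)
qed

end
theorem lemma4p9:
  fixes n k :: nat
    and A :: "nat \<Rightarrow> complex^'d^'d"
    and bH :: "nat \<Rightarrow> complex" and bT :: complex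
  assumes k: "1 \<le> k" "k \<le> n"
    and inv: "\<And>i. i \<in> {1..n} \<Longrightarrow> invertible (A i)"
    and ss: "\<And>i. i \<in> {1..n} \<Longrightarrow> semisimple (A i)"
    and rho_delta: "rep A (delta n) = mat 1"
    and bH0: "\<And>i. i \<in> {1..n} \<Longrightarrow> bH i \<noteq> 0"
    and bT0: "bT \<noteq> 0"
    and prod1: "bT * (\<Prod>i=1..n. bH i) = 1"
    and bT1: "bT \<noteq> 1"
  shows
    "(\<forall>f. (\<forall>i\<in>{1..n}. f i \<in> Fix (twist A bH i)) \<longrightarrow>
        eqC n (twist A bH)
          (phi n (f(k := bT *s f k)))
          (\<Sum>i=1..n. sym (mu n k (alpha i)) (f i)))
     \<and>
     (\<forall>f g. (\<forall>i\<in>{1..n}. f i \<in> Fix (twist A bH i)) \<longrightarrow>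
            (\<forall>i\<in>{1..n}. g i \<in> Fix (twist A bH i)) \<longrightarrow>
            eqC n (twist A bH) (phi n f) (phi n g) \<longrightarrow>
            (\<forall>i\<in>{1..n}. f i = g i))"
  proof -
  interpret setting n A bH bT
    using inv rho_delta bH0 prod1 by unfold_locales auto
  show ?thesis
  proof (intro conjI allI impI)
    fix f assume "\<forall>i\<in>{1..n}. f i \<in> Fix (twist A bH i)"
    then show "eqC n (twist A bH) (phi n (f(k := bT *s f k))) (\<Sum>i=1..n. sym (mu n k (alpha i)) (f i))"
      using part1[OF k] by blast
  next
    fix f g i assume "eqC n (twist A bH) (phi n f) (phi n g)"
    then show "\<forall>i\<in>{1..n}. f i = g i" using part2 by blast
  qed
qed

end
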